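(* There exists a hypothesis class $\mathcal H$ of VC dimension $1$ such that every protocol that learns $\mathcal H$ in the agnostic case with error parameter $\epsilon$ has sample complexity at least $\tilde\Omega(1/\epsilon)$.
   Context: Communication model: Let $\mathcal X$ be a domain and $\mathcal Z=\mathcal X\times\{\pm1\}$ the set of examples. A sample is a finite sequence of examples. Alice receives a sample $S_a$ and Bob a sample $S_b$; the joint sample $S=(S_a,S_b)$ is their concatenation, arbitrarily split. A deterministic protocol proceeds by messages, each either a single example from the sender's own input sample or a single bit, depending only on the sender's input and previous messages; output is determined by the messages. Each example or bit costs one unit; sample complexity is the maximal number of units transmitted. $L_S(h)=\frac{1}{|S|}\sum_{(x,y)\in S}1[h(x)\ne y]$. A protocol learns $\mathcal H$ in the agnostic case with error $\epsilon$ if for every input sample $S$ (no realizability assumption) it outputs a hypothesis $h:\mathcal X\to\{\pm1\}$ (not necessarily in $\mathcal H$) with $L_S(h)\le\min_{f\in\mathcal H}L_S(f)+\epsilon$. $\tilde\Omega$ denotes a lower bound up to logarithmic factors. *)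

theory Defs
  imports Complex_Main
begin

text \<open>Labels in {+1,-1} are represented by bool (True = +1, False = -1).\<close>

type_synonym 'x example = "'x \<times> bool"
type_synonym 'x sample = "'x example list"

definition emp_loss :: "('x \<Rightarrow> bool) \<Rightarrow> 'x sample \<Rightarrow> real" where
  "emp_loss h S = real (length (filter (\<lambda>(x, y). h x \<noteq> y) S)) / real (length S)"

definition shatters :: "('x \<Rightarrow> bool) set \<Rightarrow> 'x set \<Rightarrow> bool" where
  "shatters H A \<longleftrightarrow> (\<forall>B \<subseteq> A. \<exists>h \<in> H. \<forall>x \<in> A. h x = (x \<in> B))"

definition VC_dim_eq :: "('x \<Rightarrow> bool) set \<Rightarrow> nat \<Rightarrow> bool" where
  "VC_dim_eq H d \<longleftrightarrow>
     (\<exists>A. finite A \<and> card A = d \<and> shatters H A) \<and>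
     (\<forall>A. finite A \<and> shatters H A \<longrightarrow> card A \<le> d)"

datatype 'x message = Example "'x example" | Bit bool
datatype party = Alice | Bob

text \<open>A deterministic protocol: who speaks next (or halting, None) is determined by the
  transcript; each party's message depends on its own input and the transcript;
  the output hypothesis is determined by the transcript.\<close>
record 'x protocol =
  turn   :: "'x message list \<Rightarrow> party option"
  alice  :: "'x sample \<Rightarrow> 'x message list \<Rightarrow> 'x message"
  bob    :: "'x sample \<Rightarrow> 'x message list \<Rightarrow> 'x message"
  out :: "'x message list \<Rightarrow> ('x \<Rightarrow> bool)"

definition valid_protocol :: "'x protocol \<Rightarrow> bool" where
  "valid_protocol P \<longleftrightarrow>
     (\<forall>S t z. (alice P S t = Example z \<longrightarrow> z \<in> set S) \<and>
              (bob P S t = Example z \<longrightarrow> z \<in> set S))"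

definition step :: "'x protocol \<Rightarrow> 'x sample \<Rightarrow> 'x sample \<Rightarrow> 'x message list \<Rightarrow> 'x message list" where
  "step P Sa Sb t = (case turn P t of
       None \<Rightarrow> t
     | Some Alice \<Rightarrow> t @ [alice P Sa t]
     | Some Bob \<Rightarrow> t @ [bob P Sb t])"

definition transcript :: "'x protocol \<Rightarrow> 'x sample \<Rightarrow> 'x sample \<Rightarrow> nat \<Rightarrow> 'x message list" where
  "transcript P Sa Sb n = (step P Sa Sb ^^ n) []"

text \<open>Sample complexity at most n: on every input the protocol halts after at most n
  transmitted units (examples or bits).\<close>
definition complexity_le :: "'x protocol \<Rightarrow> nat \<Rightarrow> bool" where
  "complexity_le P n \<longleftrightarrow> (\<forall>Sa Sb. turn P (transcript P Sa Sb n) = None)"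

text \<open>Agnostic learning with error eps (given that the protocol halts within n units).\<close>
definition learns_agnostic :: "'x protocol \<Rightarrow> nat \<Rightarrow> ('x \<Rightarrow> bool) set \<Rightarrow> real \<Rightarrow> bool" where
  "learns_agnostic P n H eps \<longleftrightarrow>
     (\<forall>Sa Sb. emp_loss (out P (transcript P Sa Sb n)) (Sa @ Sb)
                \<le> (INF f\<in>H. emp_loss f (Sa @ Sb)) + eps)"

end

theory Submission imports Defs begin

lemma tr_Suc: "transcript P Sa Sb (Suc k) = step P Sa Sb (transcript P Sa Sb k)"
  by (simp add: transcript_def)

lemma tr_0: "transcript P Sa Sb 0 = []" by (simp add: transcript_def)

lemma step_cases: "step P Sa Sb t = t \<or> (\<exists>m. step P Sa Sb t = t @ [m])"
  by (auto simp: step_def split: option.splits party.splits)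

lemma tr_len_le: "length (transcript P Sa Sb k) \<le> k"
proof (induction k)
  case 0 then show ?case by (simp add: tr_0)
next
  case (Suc k) then show ?case using step_cases[of P Sa Sb "transcript P Sa Sb k"]
    by (auto simp: tr_Suc)
qed

lemma tr_prefix: "\<exists>ys. transcript P Sa Sb (k + j) = transcript P Sa Sb k @ ys"
proof (induction j)
  case 0 then show ?case by simp
next
  case (Suc j)
  then obtain ys where ys: "transcript P Sa Sb (k + j) = transcript P Sa Sb k @ ys" by blast
  show ?case using step_cases[of P Sa Sb "transcript P Sa Sb (k+j)"] ys
    by (auto simp: tr_Suc)
qed

lemma tr_fix_or_len: "step P Sa Sb (transcript P Sa Sb k) = transcript P Sa Sb k
   \<or> length (transcript P Sa Sb k) = k"
proof (induction k)
  case 0 then show ?case by (simp add: tr_0)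
next
  case (Suc k)
  then show ?case using step_cases[of P Sa Sb "transcript P Sa Sb k"]
    by (auto simp: tr_Suc)
qed

lemma tr_fix_stay: "step P Sa Sb (transcript P Sa Sb k) = transcript P Sa Sb k
   \<Longrightarrow> transcript P Sa Sb (k + j) = transcript P Sa Sb k"
  by (induction j) (auto simp: tr_Suc)

lemma tr_take: assumes "k \<le> n" shows "take k (transcript P Sa Sb n) = transcript P Sa Sb k"
proof -
  have n: "n = k + (n - k)" using assms by simp
  from tr_fix_or_len[of P Sa Sb k] show ?thesis
  proof
    assume f: "step P Sa Sb (transcript P Sa Sb k) = transcript P Sa Sb k"
    have "transcript P Sa Sb n = transcript P Sa Sb k"
      using tr_fix_stay[OF f, of "n-k"] n by simp
    then show ?thesis using tr_len_le[of P Sa Sb k] by simp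
  next
    assume l: "length (transcript P Sa Sb k) = k"
    obtain ys where "transcript P Sa Sb (k + (n-k)) = transcript P Sa Sb k @ ys"
      using tr_prefix by blast
    then show ?thesis using n l by (metis append_eq_conv_conj)
  qed
qed

lemma rectangle:
  assumes eq: "transcript P Sa Sb n = transcript P Sa' Sb' n"
  shows "k \<le> n \<Longrightarrow> transcript P Sa Sb' k = transcript P Sa Sb k"
proof (induction k)
  case 0 then show ?case by (simp add: tr_0)
next
  case (Suc k)
  let ?T = "transcript P Sa Sb n"
  have u1: "transcript P Sa Sb k = take k ?T" using tr_take[of _ n P Sa Sb] Suc.prems by simp
  have u2: "transcript P Sa' Sb' k = take k ?T" using tr_take[of k n P Sa' Sb'] Suc.prems eq by simp
  have v1: "transcript P Sa Sb (Suc k) = take (Suc k) ?T" using tr_take[of _ n P Sa Sb] Suc.prems by simp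
  have v2: "transcript P Sa' Sb' (Suc k) = take (Suc k) ?T" using tr_take[of "Suc k" n P Sa' Sb'] Suc.prems eq by simp
  have ih: "transcript P Sa Sb' k = take k ?T" using Suc u1 by simp
  have "transcript P Sa Sb' (Suc k) = transcript P Sa Sb (Suc k)"
  proof (cases "turn P (take k ?T)")
    case None then show ?thesis using ih u1 by (simp add: tr_Suc step_def)
  next
    case (Some p)
    show ?thesis
    proof (cases p)
      case Alice then show ?thesis using ih u1 Some by (simp add: tr_Suc step_def)
    next
      case Bob
      have "transcript P Sa Sb' (Suc k) = transcript P Sa' Sb' (Suc k)"
        using ih u2 Some Bob by (simp add: tr_Suc step_def)
      then show ?thesis using v1 v2 by simp
    qed
  qed
  then show ?case .
qed

lemma tr_alpha:
  assumes "valid_protocol P"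
  shows "set (transcript P Sa Sb k) \<subseteq> range Bit \<union> Example ` (set Sa \<union> set Sb)"
proof (induction k)
  case 0 then show ?case by (simp add: tr_0)
next
  case (Suc k)
  let ?t = "transcript P Sa Sb k"
  have a: "alice P Sa ?t \<in> range Bit \<union> Example ` (set Sa \<union> set Sb)"
    using assms unfolding valid_protocol_def by (cases "alice P Sa ?t") auto
  have b: "bob P Sb ?t \<in> range Bit \<union> Example ` (set Sa \<union> set Sb)"
    using assms unfolding valid_protocol_def by (cases "bob P Sb ?t") auto
  show ?case using Suc a b by (auto simp: tr_Suc step_def split: option.splits party.splits)
qed


definition SA :: "nat set \<Rightarrow> nat \<Rightarrow> real sample" where
  "SA A m = map (\<lambda>i. (real i, i \<in> A)) [1..<Suc m]"
definition SB :: "nat set \<Rightarrow> nat \<Rightarrow> real sample" where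
  "SB A m = map (\<lambda>i. (real i, i \<notin> A)) [1..<Suc m]"

definition errc :: "(real \<Rightarrow> bool) \<Rightarrow> real sample \<Rightarrow> nat" where
  "errc h S = length (filter (\<lambda>(x, y). h x \<noteq> y) S)"

lemma errc_app: "errc h (S @ T) = errc h S + errc h T" by (simp add: errc_def)

lemma errc_map: "errc h (map (\<lambda>i. (real i, Q i)) [1..<Suc m])
   = (\<Sum>i\<in>{1..m}. if h (real i) \<noteq> Q i then 1 else 0)"
proof -
  have "errc h (map (\<lambda>i. (real i, Q i)) [1..<Suc m])
      = length (filter (\<lambda>i. h (real i) \<noteq> Q i) [1..<Suc m])"
    by (simp add: errc_def o_def)
  also have "\<dots> = card {i \<in> {1..m}. h (real i) \<noteq> Q i}"
  proof -
    have "set [1..<Suc m] = {1..m}" by auto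
    have "{i \<in> {1..m}. h (real i) \<noteq> Q i} = ({i. h (real i) \<noteq> Q i} \<inter> set [1..<Suc m])" by auto
    moreover have "length (filter (\<lambda>i. h (real i) \<noteq> Q i) [1..<Suc m]) = card ({i. h (real i) \<noteq> Q i} \<inter> set [1..<Suc m])"
      by (rule distinct_length_filter) simp
    ultimately show ?thesis by simp
  qed
  also have "\<dots> = (\<Sum>i\<in>{1..m}. if h (real i) \<noteq> Q i then 1 else 0)"
    by (simp add: sum.If_cases) (rule arg_cong[where f=card], auto)
  finally show ?thesis .
qed

lemma len_SA: "length (SA A m) = m" by (simp add: SA_def)
lemma len_SB: "length (SB A m) = m" by (simp add: SB_def)

lemma errc_SA: "errc h (SA A m) = (\<Sum>i\<in>{1..m}. if h (real i) \<noteq> (i \<in> A) then 1 else 0)"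
  unfolding SA_def by (rule errc_map)
lemma errc_SB: "errc h (SB A m) = (\<Sum>i\<in>{1..m}. if h (real i) \<noteq> (i \<notin> A) then 1 else 0)"
  unfolding SB_def by (rule errc_map)

lemma sum_four:
  "errc h (SA A m) + errc h (SB B m) + errc h (SA B m) + errc h (SB A m) = 2 * m"
proof -
  have "errc h (SA A m) + errc h (SB B m) + errc h (SA B m) + errc h (SB A m)
    = (\<Sum>i\<in>{1..m}. (if h (real i) \<noteq> (i \<in> A) then 1 else 0) + (if h (real i) \<noteq> (i \<notin> B) then 1 else 0)
        + (if h (real i) \<noteq> (i \<in> B) then 1 else 0) + (if h (real i) \<noteq> (i \<notin> A) then 1 else 0))"
    by (simp add: errc_SA errc_SB sum.distrib)
  also have "\<dots> = (\<Sum>i\<in>{1..m}. 2::nat)" by (rule sum.cong) auto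
  finally show ?thesis by simp
qed

lemma sum_four_special:
  assumes j: "j \<in> {1..m}" "j \<in> A" "j \<notin> B"
  shows "errc (\<lambda>x. x = real j) (SA A m) + errc (\<lambda>x. x = real j) (SB B m)
       + errc (\<lambda>x. x = 0) (SA B m) + errc (\<lambda>x. x = 0) (SB A m) = 2 * m - 2"
proof -
  let ?g = "\<lambda>i::nat. (if (real i = real j) \<noteq> (i \<in> A) then 1 else 0) + (if (real i = real j) \<noteq> (i \<notin> B) then 1 else 0)
        + (if (real i = 0) \<noteq> (i \<in> B) then 1 else 0) + (if (real i = 0) \<noteq> (i \<notin> A) then (1::nat) else 0)"
  have "errc (\<lambda>x. x = real j) (SA A m) + errc (\<lambda>x. x = real j) (SB B m)
       + errc (\<lambda>x. x = 0) (SA B m) + errc (\<lambda>x. x = 0) (SB A m) = sum ?g {1..m}"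
    by (simp add: errc_SA errc_SB sum.distrib)
  also have "\<dots> = ?g j + sum ?g ({1..m} - {j})"
    using j by (simp add: sum.remove)
  also have "?g j = 0" using j by auto
  also have "sum ?g ({1..m} - {j}) = sum (\<lambda>_. 2) ({1..m} - {j})"
    by (rule sum.cong) auto
  also have "\<dots> = 2 * (m - 1)" using j by simp
  finally show ?thesis by simp
qed


definition Hs :: "(real \<Rightarrow> bool) set" where "Hs = range (\<lambda>r x. x = r)"

lemma emp_errc: "emp_loss h S = real (errc h S) / real (length S)"
  by (simp add: emp_loss_def errc_def)

lemma inf_le: "g \<in> Hs \<Longrightarrow> (INF f\<in>Hs. emp_loss f S) \<le> emp_loss g S"
  by (rule cINF_lower) (auto intro!: bdd_belowI[where m=0] simp: emp_loss_def)

lemma fool: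
  assumes learn: "learns_agnostic P n Hs eps"
    and small: "eps * (2 * real m) < 1"
    and AB: "A \<subseteq> {1..m}" "j \<in> A" "j \<notin> B"
  shows "transcript P (SA A m) (SB A m) n \<noteq> transcript P (SA B m) (SB B m) n"
proof
  assume eq: "transcript P (SA A m) (SB A m) n = transcript P (SA B m) (SB B m) n"
  let ?T = "transcript P (SA A m) (SB A m) n"
  have t1: "transcript P (SA A m) (SB B m) n = ?T"
    using rectangle[OF eq, of n] by simp
  have t2: "transcript P (SA B m) (SB A m) n = ?T"
    using rectangle[OF eq[symmetric], of n] eq by simp
  define h where "h = out P ?T"
  have jm: "j \<in> {1..m}" using AB by auto
  then have mpos: "m \<ge> 1" by simp
  have L: "\<And>X Y. length (SA X m @ SB Y m) = 2 * m" by (simp add: len_SA len_SB)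
  have l1: "emp_loss h (SA A m @ SB B m) \<le> emp_loss (\<lambda>x. x = real j) (SA A m @ SB B m) + eps"
    using learn[unfolded learns_agnostic_def, rule_format, of "SA A m" "SB B m"] t1
      inf_le[of "\<lambda>x. x = real j" "SA A m @ SB B m"] unfolding h_def Hs_def by force
  have l2: "emp_loss h (SA B m @ SB A m) \<le> emp_loss (\<lambda>x. x = 0) (SA B m @ SB A m) + eps"
    using learn[unfolded learns_agnostic_def, rule_format, of "SA B m" "SB A m"] t2
      inf_le[of "\<lambda>x. x = 0" "SA B m @ SB A m"] unfolding h_def Hs_def by force
  have s4: "real (errc h (SA A m @ SB B m)) + real (errc h (SA B m @ SB A m)) = 2 * real m"
    using sum_four[of h A m B] by (simp add: errc_app)
  have s5: "real (errc (\<lambda>x. x = real j) (SA A m @ SB B m)) + real (errc (\<lambda>x. x = 0) (SA B m @ SB A m)) = 2 * real m - 2"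
  proof -
    have "errc (\<lambda>x. x = real j) (SA A m @ SB B m) + errc (\<lambda>x. x = 0) (SA B m @ SB A m) = 2 * m - 2"
      using sum_four_special[OF jm AB(2,3)] by (simp add: errc_app add.assoc)
    then have "real (errc (\<lambda>x. x = real j) (SA A m @ SB B m) + errc (\<lambda>x. x = 0) (SA B m @ SB A m)) = real (2 * m - 2)"
      by simp
    then show ?thesis using mpos by (simp add: of_nat_diff)
  qed
  have mp: "real m > 0" using mpos by simp
  from l1 l2 have "(real (errc h (SA A m @ SB B m)) + real (errc h (SA B m @ SB A m))) / (2 * real m)
     \<le> (real (errc (\<lambda>x. x = real j) (SA A m @ SB B m)) + real (errc (\<lambda>x. x = 0) (SA B m @ SB A m))) / (2 * real m) + 2 * eps"
    unfolding emp_errc L by (simp add: add_divide_distrib)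
  then have "1 \<le> (2 * real m - 2) / (2 * real m) + 2 * eps" using s4 s5 mp by simp
  then have "2 * real m \<le> 2 * real m - 2 + 2 * eps * (2 * real m)" using mp
    by (simp add: field_simps)
  then show False using small by (simp add: algebra_simps)
qed


definition MM :: "nat \<Rightarrow> real message set" where
  "MM m = range Bit \<union> Example ` ((real ` {1..m}) \<times> UNIV)"

lemma MM_fin: "finite (MM m)" by (simp add: MM_def)

lemma MM_card: "card (MM m) \<le> 2 * m + 2"
proof -
  have "card (MM m) \<le> card (range Bit :: real message set) + card (Example ` ((real ` {1..m}) \<times> (UNIV::bool set)))"
    unfolding MM_def by (rule card_Un_le)
  moreover have "card (range Bit :: real message set) \<le> 2"
    using card_image_le[of "UNIV::bool set" Bit] by simp
  moreover have "card (Example ` ((real ` {1..m}) \<times> (UNIV::bool set))) \<le> 2 * m"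
  proof -
    have "card (Example ` ((real ` {1..m}) \<times> (UNIV::bool set))) \<le> card ((real ` {1..m}) \<times> (UNIV::bool set))"
      by (rule card_image_le) simp
    also have "\<dots> = card (real ` {1..m}) * 2" by (simp add: card_cartesian_product)
    also have "\<dots> \<le> m * 2" using card_image_le[of "{1..m}" real] by simp
    finally show ?thesis by simp
  qed
  ultimately show ?thesis by linarith
qed

lemma card_lists_le:
  assumes "finite M" "card M \<le> K" "K \<ge> 1"
  shows "card {xs. set xs \<subseteq> M \<and> length xs \<le> n} \<le> (n + 1) * K ^ n"
proof -
  have eq: "{xs. set xs \<subseteq> M \<and> length xs \<le> n} = (\<Union>k\<in>{..n}. {xs. set xs \<subseteq> M \<and> length xs = k})"
    by auto
  have "card (\<Union>k\<in>{..n}. {xs. set xs \<subseteq> M \<and> length xs = k}) \<le> (\<Sum>k\<in>{..n}. card {xs. set xs \<subseteq> M \<and> length xs = k})"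
    by (rule card_UN_le) simp
  also have "\<dots> = (\<Sum>k\<in>{..n}. card M ^ k)" using assms(1) by (simp add: card_lists_length_eq)
  also have "\<dots> \<le> (\<Sum>k\<in>{..n}. K ^ n)"
  proof (rule sum_mono)
    fix k assume "k \<in> {..n}"
    then have "card M ^ k \<le> K ^ k" "K ^ k \<le> K ^ n" using assms
      by (auto intro: power_mono power_increasing)
    then show "card M ^ k \<le> K ^ n" by linarith
  qed
  also have "\<dots> = (n + 1) * K ^ n" by simp
  finally show ?thesis using eq by simp
qed

lemma set_SA_SB: "set (SA A m) \<union> set (SB A m) \<subseteq> (real ` {1..m}) \<times> UNIV"
  by (auto simp: SA_def SB_def)

lemma count:
  assumes valid: "valid_protocol P" and learn: "learns_agnostic P n Hs eps"
    and small: "eps * (2 * real m) < 1"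
  shows "2 ^ m \<le> (n + 1) * (2 * m + 2) ^ n"
proof -
  define F where "F A = transcript P (SA A m) (SB A m) n" for A
  have inj: "inj_on F (Pow {1..m})"
  proof (rule inj_onI)
    fix A B assume A: "A \<in> Pow {1..m}" and B: "B \<in> Pow {1..m}" and e: "F A = F B"
    show "A = B"
    proof (rule ccontr)
      assume "A \<noteq> B"
      then obtain j where "(j \<in> A \<and> j \<notin> B) \<or> (j \<in> B \<and> j \<notin> A)" by blast
      then show False
      proof
        assume "j \<in> A \<and> j \<notin> B"
        then show False using fool[OF learn small, of A j B] A e unfolding F_def by auto
      next
        assume "j \<in> B \<and> j \<notin> A"
        then show False using fool[OF learn small, of B j A] B e unfolding F_def by auto
      qed
    qed
  qed
  have sub: "F ` Pow {1..m} \<subseteq> {xs. set xs \<subseteq> MM m \<and> length xs \<le> n}"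
  proof
    fix xs assume "xs \<in> F ` Pow {1..m}"
    then obtain A where xs: "xs = F A" by blast
    have "set xs \<subseteq> range Bit \<union> Example ` (set (SA A m) \<union> set (SB A m))"
      unfolding xs F_def by (rule tr_alpha[OF valid])
    also have "\<dots> \<subseteq> MM m" using set_SA_SB[of A m] unfolding MM_def by blast
    finally show "xs \<in> {xs. set xs \<subseteq> MM m \<and> length xs \<le> n}"
      using tr_len_le unfolding xs F_def by auto
  qed
  have "2 ^ m = card (Pow {1..m::nat})" by (simp add: card_Pow)
  also have "\<dots> = card (F ` Pow {1..m})" using card_image[OF inj] by simp
  also have "\<dots> \<le> card {xs. set xs \<subseteq> MM m \<and> length xs \<le> n}"
    by (rule card_mono[OF finite_lists_length_le[OF MM_fin] sub])
  also have "\<dots> \<le> (n + 1) * (2 * m + 2) ^ n"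
    by (rule card_lists_le[OF MM_fin MM_card]) simp
  finally show ?thesis .
qed

lemma vc: "VC_dim_eq Hs 1"
  unfolding VC_dim_eq_def
proof (intro conjI allI impI)
  show "\<exists>A. finite A \<and> card A = 1 \<and> shatters Hs A"
  proof (intro exI conjI)
    show "shatters Hs {0::real}" unfolding shatters_def Hs_def
    proof (intro allI impI)
      fix B assume "B \<subseteq> {0::real}"
      then have "B = {} \<or> B = {0}" by blast
      then show "\<exists>h\<in>range (\<lambda>r x. x = r). \<forall>x\<in>{0}. h x = (x \<in> B)"
      proof
        assume "B = {}" then show ?thesis by (intro bexI[of _ "\<lambda>x. x = 1"]) auto
      next
        assume "B = {0}" then show ?thesis by (intro bexI[of _ "\<lambda>x. x = 0"]) auto
      qed
    qed
  qed auto
next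
  fix A :: "real set" assume "finite A \<and> shatters Hs A"
  then have f: "finite A" and s: "shatters Hs A" by auto
  show "card A \<le> 1"
  proof (rule ccontr)
    assume "\<not> card A \<le> 1"
    then obtain a b where ab: "a \<in> A" "b \<in> A" "a \<noteq> b"
      using card_le_Suc0_iff_eq[OF f] by auto
    obtain h where "h \<in> Hs" "\<forall>x\<in>A. h x = (x \<in> A)" using s unfolding shatters_def by blast
    then obtain r where "\<forall>x\<in>A. (x = r) = (x \<in> A)" unfolding Hs_def by auto
    then show False using ab by metis
  qed
qed


theorem theorem3:
  shows "\<exists>H :: (real \<Rightarrow> bool) set. VC_dim_eq H 1 \<and>
    (\<exists>c > 0. \<exists>k :: nat. \<exists>eps0 > 0.
       \<forall>eps P n. 0 < eps \<and> eps < eps0 \<and> valid_protocol P \<and> complexity_le P n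
                 \<and> learns_agnostic P n H eps
         \<longrightarrow> c / (eps * (ln (1 / eps)) ^ k) \<le> real n)"
proof (intro exI conjI allI impI)
  show "VC_dim_eq Hs 1" by (rule vc)
  show "(0::real) < 1/32" by simp
  show "(0::real) < 1/8" by simp
  fix eps :: real and P n
  assume a: "0 < eps \<and> eps < 1/8 \<and> valid_protocol P \<and> complexity_le P n \<and> learns_agnostic P n Hs eps"
  then have e0: "0 < eps" and e1: "eps < 1/8" and valid: "valid_protocol P"
    and learn: "learns_agnostic P n Hs eps" by auto
  define m where "m = nat \<lfloor>1 / (4 * eps)\<rfloor>"
  have q: "1 / (4 * eps) > 2" using e0 e1 by (simp add: field_simps)
  have mle: "real m \<le> 1 / (4 * eps)" unfolding m_def using q by linarith
  have mge: "real m \<ge> 1 / (4 * eps) - 1" unfolding m_def using q by linarith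
  have small: "eps * (2 * real m) < 1"
  proof -
    have "eps * (2 * real m) \<le> eps * (2 * (1 / (4 * eps)))" using mle e0
      by (intro mult_left_mono) auto
    also have "\<dots> = 1/2" using e0 by simp
    finally show ?thesis by simp
  qed
  have cnt: "2 ^ m \<le> (n + 1) * (2 * m + 2) ^ n" by (rule count[OF valid learn small])
  then have "real (2 ^ m) \<le> real ((n + 1) * (2 * m + 2) ^ n)" by (simp only: of_nat_le_iff)
  then have cr: "2 ^ m \<le> (real n + 1) * (2 * real m + 2) ^ n" by (simp add: algebra_simps)
  have "ln (2 ^ m) \<le> ln ((real n + 1) * (2 * real m + 2) ^ n)"
    using cr by (subst ln_le_cancel_iff) auto
  then have lnb: "real m * ln 2 \<le> ln (real n + 1) + real n * ln (2 * real m + 2)"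
    by (simp add: ln_mult ln_realpow)
  have l1: "ln (real n + 1) \<le> real n" using ln_le_minus_one[of "real n + 1"] by simp
  define Lg where "Lg = ln (1 / eps)"
  have "2 * real m + 2 \<le> 1 / eps"
  proof -
    have "2 * real m + 2 \<le> 2 * (1 / (4 * eps)) + 2" using mle by simp
    also have "\<dots> \<le> 1 / eps" using e0 e1 by (simp add: field_simps)
    finally show ?thesis .
  qed
  then have l2: "ln (2 * real m + 2) \<le> Lg" unfolding Lg_def using e0 by (subst ln_le_cancel_iff) auto
  have Lg1: "1 \<le> Lg"
  proof -
    have "eps * exp 1 \<le> eps * 3" using exp_le e0 by (intro mult_left_mono) auto
    then have "eps * exp 1 \<le> 1" using e1 by linarith
    then have "exp 1 \<le> 1 / eps" using e0 by (simp add: field_simps)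
    then have "ln (exp 1) \<le> ln (1 / eps)" using e0 by (subst ln_le_cancel_iff) auto
    then show ?thesis unfolding Lg_def by simp
  qed
  have ln2: "ln 2 \<ge> (1::real) / 2" using ln_diff_le[of 1 2] by simp
  have "real m * (1/2) \<le> real m * ln 2" using ln2 by (intro mult_left_mono) auto
  also have "\<dots> \<le> real n + real n * Lg"
  proof -
    have "real n * ln (2 * real m + 2) \<le> real n * Lg" using l2 by (intro mult_left_mono) auto
    then show ?thesis using lnb l1 by linarith
  qed
  also have "\<dots> \<le> 2 * real n * Lg"
  proof -
    have "real n * 1 \<le> real n * Lg" using Lg1 by (intro mult_left_mono) auto
    then show ?thesis by linarith
  qed
  finally have m4: "real m \<le> 4 * real n * Lg" by simp
  have "1 / (8 * eps) \<le> real m"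
  proof -
    have "1 / (8 * eps) \<le> 1 / (4 * eps) - 1" using e0 e1 by (simp add: field_simps)
    then show ?thesis using mge by simp
  qed
  then have "1 / (8 * eps) \<le> 4 * real n * Lg" using m4 by simp
  then have "1 \<le> 32 * eps * Lg * real n" using e0 by (simp add: field_simps)
  then show "1 / 32 / (eps * ln (1 / eps) ^ 1) \<le> real n"
    using e0 Lg1 unfolding Lg_def[symmetric] by (simp add: field_simps)
qed

end
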